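(* Let $d\ge 1$ and $N_1,\ldots,N_d\ge 1$ be integers. For each $j\in\{1,\ldots,d\}$ let $p_j,q_j:\{0,1,\ldots,N_j\}\to[0,1]$ satisfy $p_j(0)=q_j(0)=p_j(N_j)=q_j(N_j)=0$, $p_j(i)>0$ and $q_j(i)>0$ for $1\le i\le N_j-1$, and assume $\sum_{k=1}^d\big(p_k(i_k)+q_k(i_k)\big)\le 1$ for every $(i_1,\ldots,i_d)$ with $1\le i_k\le N_k$. Let $Z'$ be the Markov chain on $\mathbb E'=\{(i_1,\ldots,i_d):1\le i_j\le N_j,\ 1\le j\le d\}\cup\{-\infty\}$ with transition probabilities, for $(i_1,\ldots,i_d)\ne-\infty$: $P((i_1,\ldots,i_d),(i_1,\ldots,i_d)+\mathbf s_j)=p_j(i_j)$; $P((i_1,\ldots,i_d),(i_1,\ldots,i_d)-\mathbf s_j)=q_j(i_j)$ whenever $i_j\ge 2$; $P((i_1,\ldots,i_d),-\infty)=\sum_{j:\,i_j=1}q_j(1)$; $P((i_1,\ldots,i_d),(i_1,\ldots,i_d))=1-\sum_{k=1}^d\big(p_k(i_k)+q_k(i_k)\big)$; all other transitions from $(i_1,\ldots,i_d)$ have probability $0$; and $P(-\infty,-\infty)=1$. Here $\mathbf s_j$ is the $j$-th unit vector. (Then $(N_1,\ldots,N_d)$ and $-\infty$ are absorbing.) For $\tau_{\mathbf e}=\inf\{n\ge 0: Z'_n=\mathbf e\}$, define $\rho((i_1,\ldots,i_d))=P\big(\tau_{(N_1,\ldots,N_d)}<\tau_{-\infty}\mid Z'_0=(i_1,\ldots,i_d)\big)$.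 Then for every $(i_1,\ldots,i_d)$ with $1\le i_j\le N_j$, $$\rho((i_1,\ldots,i_d))=\frac{\prod_{j=1}^d\left(\sum_{n_j=1}^{i_j}\prod_{r=1}^{n_j-1}\frac{q_j(r)}{p_j(r)}\right)}{\prod_{j=1}^d\left(\sum_{n_j=1}^{N_j}\prod_{r=1}^{n_j-1}\frac{q_j(r)}{p_j(r)}\right)},$$ with empty products equal to $1$.
   Context: Interpretation: one player plays against $d$ others; $i_j$ is the player's current fortune against player $j$, $N_j$ the total money in that pair; reaching $i_j=0$ for some $j$ means losing (state $-\infty$), reaching $(N_1,\ldots,N_d)$ means winning. *)

theory Defs
  imports Complex_Main
begin

text \<open>States of the chain Z': Some x with x a list of length d (coordinate j is
  index j-1 of the paper), or None standing for the state -infinity.\<close>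

type_synonym state = "nat list option"

definition grid :: "nat \<Rightarrow> (nat \<Rightarrow> nat) \<Rightarrow> nat list set" where
  "grid d N = {x. length x = d \<and> (\<forall>j<d. 1 \<le> x ! j \<and> x ! j \<le> N j)}"

definition states :: "nat \<Rightarrow> (nat \<Rightarrow> nat) \<Rightarrow> state set" where
  "states d N = insert None (Some ` grid d N)"

fun trans :: "nat \<Rightarrow> (nat \<Rightarrow> nat \<Rightarrow> real) \<Rightarrow> (nat \<Rightarrow> nat \<Rightarrow> real)
              \<Rightarrow> state \<Rightarrow> state \<Rightarrow> real" where
  "trans d p q None None = 1"
| "trans d p q None (Some y) = 0"
| "trans d p q (Some x) None = (\<Sum>j\<in>{j. j < d \<and> x ! j = 1}. q j 1)"
| "trans d p q (Some x) (Some y) =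
     (if y = x then 1 - (\<Sum>k<d. p k (x ! k) + q k (x ! k)) else 0)
     + (\<Sum>j<d. (if y = x[j := x ! j + 1] then p j (x ! j) else 0)
              + (if 2 \<le> x ! j \<and> y = x[j := x ! j - 1] then q j (x ! j) else 0))"

text \<open>first_hit d N p q n s = P(tau_T = n and tau_{-inf} > n | Z'_0 = s), where
  T = (N_1,...,N_d): probability that the chain started in s visits T for the first
  time at step n without having visited -infinity before (first-passage decomposition
  by the Markov property).\<close>
fun first_hit :: "nat \<Rightarrow> (nat \<Rightarrow> nat) \<Rightarrow> (nat \<Rightarrow> nat \<Rightarrow> real) \<Rightarrow> (nat \<Rightarrow> nat \<Rightarrow> real)
                  \<Rightarrow> nat \<Rightarrow> state \<Rightarrow> real" where
  "first_hit d N p q 0 s = (if s = Some (map N [0..<d]) then 1 else 0)"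
| "first_hit d N p q (Suc n) s =
     (if s = Some (map N [0..<d]) \<or> s = None then 0
      else (\<Sum>t\<in>states d N. trans d p q s t * first_hit d N p q n t))"

text \<open>rho(s) = P(tau_T < tau_{-inf} | Z'_0 = s) = sum over n of P(tau_T = n < tau_{-inf}).\<close>
definition rho :: "nat \<Rightarrow> (nat \<Rightarrow> nat) \<Rightarrow> (nat \<Rightarrow> nat \<Rightarrow> real) \<Rightarrow> (nat \<Rightarrow> nat \<Rightarrow> real)
                   \<Rightarrow> state \<Rightarrow> real" where
  "rho d N p q s = (\<Sum>n. first_hit d N p q n s)"

end

theory Submission
  imports Defs
begin

locale gr =
  fixes d :: nat and N :: "nat \<Rightarrow> nat" and p q :: "nat \<Rightarrow> nat \<Rightarrow> real"
  assumes N1: "\<forall>j<d. N j \<ge> 1"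
    and pq01: "\<forall>j<d. \<forall>i\<le>N j. 0 \<le> p j i \<and> p j i \<le> 1 \<and> 0 \<le> q j i \<and> q j i \<le> 1"
    and pq0: "\<forall>j<d. p j 0 = 0 \<and> q j 0 = 0 \<and> p j (N j) = 0 \<and> q j (N j) = 0"
    and pqpos: "\<forall>j<d. \<forall>i. 1 \<le> i \<and> i \<le> N j - 1 \<longrightarrow> p j i > 0 \<and> q j i > 0"
    and Rle: "\<forall>x\<in>grid d N. (\<Sum>k<d. p k (x ! k) + q k (x ! k)) \<le> 1"
begin

definition a where "a j i = (\<Sum>n=1..i. \<Prod>r=1..<n. q j r / p j r)"
definition w where "w j i = (\<Prod>r=1..<Suc i. q j r / p j r)"
definition H where "H y = (\<Prod>j<d. a j (y!j))"
definition D where "D = H (map N [0..<d])"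
definition hh where "hh s = (case s of None \<Rightarrow> 0 | Some y \<Rightarrow> H y / D)"
definition R where "R x = (\<Sum>k<d. p k (x!k) + q k (x!k))"
abbreviation T where "T \<equiv> Some (map N [0..<d])"
abbreviation P where "P \<equiv> trans d p q"
abbreviation S where "S n s \<equiv> (\<Sum>k<n. first_hit d N p q k s)"

lemma a0: "a j 0 = 0" by (simp add: a_def)
lemma a_Suc: "a j (Suc i) = a j i + w j i"
  by (simp add: a_def w_def)
lemma w_Suc: "w j (Suc i) = w j i * (q j (Suc i) / p j (Suc i))"
  by (simp add: w_def)

lemma w_nonneg: "j < d \<Longrightarrow> i < N j \<Longrightarrow> w j i \<ge> 0"
  unfolding w_def using pq01 by (intro prod_nonneg) auto

lemma a_ge1: "j < d \<Longrightarrow> 1 \<le> i \<Longrightarrow> i \<le> N j \<Longrightarrow> a j i \<ge> 1"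
proof (induction i)
  case 0 then show ?case by simp
next
  case (Suc i)
  show ?case
  proof (cases "i = 0")
    case True then show ?thesis by (simp add: a_Suc a0 w_def)
  next
    case False
    then have "a j i \<ge> 1" using Suc by auto
    moreover have "w j i \<ge> 0" using Suc by (intro w_nonneg) auto
    ultimately show ?thesis by (simp add: a_Suc)
  qed
qed

lemma a_nonneg: "j < d \<Longrightarrow> i \<le> N j \<Longrightarrow> a j i \<ge> 0"
  using a_ge1[of j i] by (cases "i = 0") (auto simp: a0)

lemma gambler:
  assumes j: "j < d" and i: "1 \<le> i" "i \<le> N j"
  shows "(p j i + q j i) * a j i = p j i * a j (Suc i) + q j i * a j (i - 1)"
proof (cases "i = N j")
  case True then show ?thesis using pq0 j by simp
next
  case False
  obtain k where k: "i = Suc k" using i by (cases i) auto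
  have pp: "p j i > 0" using pqpos j i False by auto
  have "p j i * w j i = q j i * w j k" using pp by (simp add: k w_Suc field_simps)
  then show ?thesis by (simp add: k a_Suc algebra_simps)
qed

lemma D_pos: "D > 0"
  unfolding D_def H_def
proof (intro prod_pos)
  fix j assume "j \<in> {..<d}"
  then have "j < d" by simp
  then have "a j (N j) \<ge> 1" using a_ge1[of j "N j"] N1 by auto
  then show "0 < a j (map N [0..<d] ! j)" using \<open>j < d\<close> by simp
qed

lemma grid_fin: "finite (grid d N)"
proof -
  have "grid d N \<subseteq> {xs. set xs \<subseteq> {0..(\<Sum>j<d. N j)} \<and> length xs = d}"
  proof
    fix x assume x: "x \<in> grid d N"
    { fix v assume "v \<in> set x"
      then obtain j where "j < d" "v = x!j" using x by (auto simp: grid_def in_set_conv_nth)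
      then have "v \<le> (\<Sum>j<d. N j)" using x
        by (metis (no_types, lifting) grid_def mem_Collect_eq finite_lessThan lessThan_iff
            member_le_sum order_trans zero_le) }
    then show "x \<in> {xs. set xs \<subseteq> {0..(\<Sum>j<d. N j)} \<and> length xs = d}"
      using x by (auto simp: grid_def)
  qed
  then show ?thesis by (rule finite_subset) (rule finite_lists_length_eq, simp)
qed

lemma states_fin: "finite (states d N)"
  using grid_fin by (simp add: states_def)

lemma up_grid: "x \<in> grid d N \<Longrightarrow> j < d \<Longrightarrow> (x[j := x!j + 1] \<in> grid d N) = (x!j < N j)"
  by (auto simp: grid_def nth_list_update)

lemma down_grid: "x \<in> grid d N \<Longrightarrow> j < d \<Longrightarrow> 2 \<le> x!j \<Longrightarrow> x[j := x!j - 1] \<in> grid d N"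
  by (auto simp: grid_def nth_list_update)

lemma H_upd:
  assumes "j < d" "length x = d"
  shows "H (x[j := v]) = a j v * (\<Prod>k\<in>{..<d}-{j}. a k (x!k))"
proof -
  have "H (x[j := v]) = a j (x[j:=v]!j) * (\<Prod>k\<in>{..<d}-{j}. a k (x[j:=v]!k))"
    unfolding H_def using assms by (subst prod.remove[of _ j]) auto
  also have "(\<Prod>k\<in>{..<d}-{j}. a k (x[j:=v]!k)) = (\<Prod>k\<in>{..<d}-{j}. a k (x!k))"
    by (intro prod.cong) auto
  finally show ?thesis using assms by simp
qed

lemma ifz: "(if c then u else (0::real)) * v = (if c then u * v else 0)" by simp

lemma trans_nonneg:
  assumes x: "x \<in> grid d N"
  shows "P (Some x) t \<ge> 0"
proof (cases t)
  case None
  then show ?thesis using pq01 N1 by (auto intro!: sum_nonneg)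
next
  case (Some y)
  have xl: "\<forall>j<d. x!j \<le> N j" using x by (auto simp: grid_def)
  have eq: "P (Some x) (Some y) = (if y = x then 1 - R x else 0) + (\<Sum>j<d. (if y = x[j := x ! j + 1] then p j (x ! j) else 0)
              + (if 2 \<le> x ! j \<and> y = x[j := x ! j - 1] then q j (x ! j) else 0))"
    by (simp only: trans.simps R_def)
  have "0 \<le> 1 - R x" using Rle x by (auto simp: R_def)
  then have A: "0 \<le> (if y = x then 1 - R x else 0)" by simp
  have B: "0 \<le> (\<Sum>j<d. (if y = x[j := x ! j + 1] then p j (x ! j) else 0)
              + (if 2 \<le> x ! j \<and> y = x[j := x ! j - 1] then q j (x ! j) else 0))"
    using pq01 xl by (intro sum_nonneg) auto
  show ?thesis unfolding Some eq using A B by (rule add_nonneg_nonneg)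
qed

lemma trans_nonneg': 
  assumes "s \<in> states d N" shows "P s t \<ge> 0"
proof (cases s)
  case None
  then show ?thesis by (cases t) auto
next
  case (Some x)
  then have "x \<in> grid d N" using assms by (auto simp: states_def)
  then show ?thesis using Some trans_nonneg by simp
qed

lemma step_sum:
  assumes x: "x \<in> grid d N"
  shows "(\<Sum>t\<in>states d N. P (Some x) t * f t) = P (Some x) None * f None + (1 - R x) * f (Some x)
     + (\<Sum>j<d. (if x!j < N j then p j (x!j) * f (Some (x[j:=x!j+1])) else 0)
             + (if 2 \<le> x!j then q j (x!j) * f (Some (x[j:=x!j-1])) else 0))"
proof -
  have "(\<Sum>t\<in>states d N. P (Some x) t * f t)
     = P (Some x) None * f None + (\<Sum>y\<in>grid d N. P (Some x) (Some y) * f (Some y))"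
    unfolding states_def using grid_fin by (subst sum.insert) (auto simp: sum.reindex)
  also have "(\<Sum>y\<in>grid d N. P (Some x) (Some y) * f (Some y))
    = (\<Sum>y\<in>grid d N. (if y = x then (1 - R x) * f (Some y) else 0)
        + (\<Sum>j<d. (if y = x[j:=x!j+1] then p j (x!j) * f (Some y) else 0)
        + (if 2 \<le> x!j \<and> y = x[j:=x!j-1] then q j (x!j) * f (Some y) else 0)))"
    by (intro sum.cong refl) (simp only: trans.simps R_def ifz distrib_right sum_distrib_right)
  also have "\<dots> = (\<Sum>y\<in>grid d N. (if y = x then (1 - R x) * f (Some y) else 0))
        + (\<Sum>j<d. (\<Sum>y\<in>grid d N. (if y = x[j:=x!j+1] then p j (x!j) * f (Some y) else 0))
        + (\<Sum>y\<in>grid d N. (if 2 \<le> x!j \<and> y = x[j:=x!j-1] then q j (x!j) * f (Some y) else 0)))"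
    by (simp only: sum.distrib sum.swap[of _ "grid d N" "{..<d}"])
  also have "(\<Sum>y\<in>grid d N. (if y = x then (1 - R x) * f (Some y) else 0)) = (1 - R x) * f (Some x)"
    using grid_fin x by (simp add: sum.delta)
  also have "(\<Sum>j<d. (\<Sum>y\<in>grid d N. (if y = x[j:=x!j+1] then p j (x!j) * f (Some y) else 0))
        + (\<Sum>y\<in>grid d N. (if 2 \<le> x!j \<and> y = x[j:=x!j-1] then q j (x!j) * f (Some y) else 0)))
     = (\<Sum>j<d. (if x!j < N j then p j (x!j) * f (Some (x[j:=x!j+1])) else 0)
             + (if 2 \<le> x!j then q j (x!j) * f (Some (x[j:=x!j-1])) else 0))"
  proof (intro sum.cong refl)
    fix j assume "j \<in> {..<d}"
    then have j: "j < d" by simp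
    have 1: "(\<Sum>y\<in>grid d N. (if y = x[j:=x!j+1] then p j (x!j) * f (Some y) else 0))
      = (if x!j < N j then p j (x!j) * f (Some (x[j:=x!j+1])) else 0)"
      using grid_fin up_grid[OF x j] by (simp add: sum.delta)
    have 2: "(\<Sum>y\<in>grid d N. (if 2 \<le> x!j \<and> y = x[j:=x!j-1] then q j (x!j) * f (Some y) else 0))
      = (if 2 \<le> x!j then q j (x!j) * f (Some (x[j:=x!j-1])) else 0)"
    proof (cases "2 \<le> x!j")
      case True
      then have "(\<Sum>y\<in>grid d N. (if 2 \<le> x!j \<and> y = x[j:=x!j-1] then q j (x!j) * f (Some y) else 0))
         = (\<Sum>y\<in>grid d N. (if y = x[j:=x!j-1] then q j (x!j) * f (Some y) else 0))" by simp
      also have "\<dots> = q j (x!j) * f (Some (x[j:=x!j-1]))"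
        using grid_fin down_grid[OF x j True] by (simp add: sum.delta)
      finally show ?thesis using True by simp
    qed simp
    show "(\<Sum>y\<in>grid d N. (if y = x[j:=x!j+1] then p j (x!j) * f (Some y) else 0))
        + (\<Sum>y\<in>grid d N. (if 2 \<le> x!j \<and> y = x[j:=x!j-1] then q j (x!j) * f (Some y) else 0))
      = (if x!j < N j then p j (x!j) * f (Some (x[j:=x!j+1])) else 0)
             + (if 2 \<le> x!j then q j (x!j) * f (Some (x[j:=x!j-1])) else 0)"
      using 1 2 by simp
  qed
  finally show ?thesis by simp
qed

lemma row_sum:
  assumes x: "x \<in> grid d N"
  shows "(\<Sum>t\<in>states d N. P (Some x) t) = 1"
proof -
  have xl: "\<forall>j<d. 1 \<le> x!j \<and> x!j \<le> N j" using x by (auto simp: grid_def)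
  have "(\<Sum>j<d. if x!j = 1 then q j (x!j) else 0) = (\<Sum>j\<in>{j\<in>{..<d}. x!j = 1}. q j (x!j))"
    by (subst sum.inter_filter) auto
  also have "\<dots> = (\<Sum>j\<in>{j. j < d \<and> x!j = 1}. q j 1)"
    by (intro sum.cong) auto
  finally have PN: "P (Some x) None = (\<Sum>j<d. if x!j = 1 then q j (x!j) else 0)" by simp
  have "(\<Sum>t\<in>states d N. P (Some x) t) = (\<Sum>t\<in>states d N. P (Some x) t * 1)" by simp
  also have "\<dots> = P (Some x) None * 1 + (1 - R x) * 1
     + (\<Sum>j<d. (if x!j < N j then p j (x!j) * 1 else 0) + (if 2 \<le> x!j then q j (x!j) * 1 else 0))"
    by (rule step_sum[OF x])
  also have "\<dots> = P (Some x) None + (1 - R x)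
     + (\<Sum>j<d. (if x!j < N j then p j (x!j) else 0) + (if 2 \<le> x!j then q j (x!j) else 0))"
    by (simp only: mult_1_right)
  also have "\<dots> = (1 - R x) + (\<Sum>j<d. (if x!j = 1 then q j (x!j) else 0)
     + ((if x!j < N j then p j (x!j) else 0) + (if 2 \<le> x!j then q j (x!j) else 0)))"
    unfolding PN sum.distrib by simp
  also have "(\<Sum>j<d. (if x!j = 1 then q j (x!j) else 0)
     + ((if x!j < N j then p j (x!j) else 0) + (if 2 \<le> x!j then q j (x!j) else 0))) = R x"
    unfolding R_def
  proof (intro sum.cong refl)
    fix j assume "j \<in> {..<d}"
    then have j: "j < d" by simp
    have "x!j < N j \<or> x!j = N j" using xl j by fastforce
    moreover have "x!j = 1 \<or> 2 \<le> x!j" using xl j by fastforce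
    ultimately show "(if x!j = 1 then q j (x!j) else 0)
     + ((if x!j < N j then p j (x!j) else 0) + (if 2 \<le> x!j then q j (x!j) else 0))
     = p j (x!j) + q j (x!j)" using pq0 j by auto
  qed
  finally show ?thesis by simp
qed


lemma hh_harm:
  assumes x: "x \<in> grid d N"
  shows "hh (Some x) = (\<Sum>t\<in>states d N. P (Some x) t * hh t)"
proof -
  have xl: "length x = d" "\<forall>j<d. 1 \<le> x!j \<and> x!j \<le> N j" using x by (auto simp: grid_def)
  have termj: "(if x!j < N j then p j (x!j) * hh (Some (x[j:=x!j+1])) else 0)
     + (if 2 \<le> x!j then q j (x!j) * hh (Some (x[j:=x!j-1])) else 0)
     = (p j (x!j) + q j (x!j)) * hh (Some x)" if j: "j < d" for j
  proof -
    define rr where "rr = (\<Prod>k\<in>{..<d}-{j}. a k (x!k))"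
    have Hx: "H x = a j (x!j) * rr" using H_upd[OF j xl(1), of "x!j"] by (simp add: rr_def)
    have Hu: "H (x[j:=Suc (x!j)]) = a j (Suc (x!j)) * rr" using H_upd[OF j xl(1)] by (simp add: rr_def)
    have Hd: "H (x[j:=x!j - Suc 0]) = a j (x!j - Suc 0) * rr" using H_upd[OF j xl(1)] by (simp add: rr_def)
    have A: "(if x!j < N j then p j (x!j) * hh (Some (x[j:=x!j+1])) else 0)
       = p j (x!j) * a j (Suc (x!j)) * rr / D"
    proof (cases "x!j < N j")
      case True then show ?thesis by (simp add: hh_def Hu)
    next
      case False
      then have "x!j = N j" using xl j by fastforce
      then show ?thesis using False pq0 j by simp
    qed
    have B: "(if 2 \<le> x!j then q j (x!j) * hh (Some (x[j:=x!j-1])) else 0)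
       = q j (x!j) * a j (x!j - 1) * rr / D"
    proof (cases "2 \<le> x!j")
      case False then have "x!j = 1" using xl j by fastforce
      then show ?thesis using False by (simp add: a0)
    qed (simp add: hh_def Hd)
    have G: "(p j (x!j) + q j (x!j)) * a j (x!j) = p j (x!j) * a j (Suc (x!j)) + q j (x!j) * a j (x!j - 1)"
      using gambler[OF j] xl j by auto
    have "(p j (x!j) + q j (x!j)) * hh (Some x) = ((p j (x!j) + q j (x!j)) * a j (x!j)) * rr / D"
      by (simp add: hh_def Hx)
    then show ?thesis unfolding A B G using D_pos by (simp add: field_simps)
  qed
  have "(\<Sum>t\<in>states d N. P (Some x) t * hh t) = P (Some x) None * hh None + (1 - R x) * hh (Some x)
     + (\<Sum>j<d. (if x!j < N j then p j (x!j) * hh (Some (x[j:=x!j+1])) else 0)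
             + (if 2 \<le> x!j then q j (x!j) * hh (Some (x[j:=x!j-1])) else 0))"
    by (rule step_sum[OF x])
  also have "(\<Sum>j<d. (if x!j < N j then p j (x!j) * hh (Some (x[j:=x!j+1])) else 0)
             + (if 2 \<le> x!j then q j (x!j) * hh (Some (x[j:=x!j-1])) else 0))
     = (\<Sum>j<d. (p j (x!j) + q j (x!j)) * hh (Some x))"
    by (intro sum.cong refl) (simp add: termj)
  also have "\<dots> = R x * hh (Some x)" by (simp add: R_def sum_distrib_right)
  finally have eq: "(\<Sum>t\<in>states d N. P (Some x) t * hh t) = P (Some x) None * hh None + (1 - R x) * hh (Some x) + R x * hh (Some x)" .
  have h0: "hh None = 0" by (simp add: hh_def)
  show ?thesis using eq h0 by (simp add: algebra_simps)
qed

lemma S_rec: "S (Suc n) s = (if s = T then 1 else if s = None then 0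
   else (\<Sum>t\<in>states d N. P s t * S n t))"
proof -
  have eq: "S (Suc n) s = first_hit d N p q 0 s + (\<Sum>k<n. first_hit d N p q (Suc k) s)"
    by (rule sum.lessThan_Suc_shift)
  have sw: "(\<Sum>k<n. \<Sum>t\<in>states d N. P s t * first_hit d N p q k t) = (\<Sum>t\<in>states d N. P s t * S n t)"
    by (simp add: sum_distrib_left) (rule sum.swap)
  show ?thesis
  proof (cases "s = T")
    case True then show ?thesis using eq by simp
  next
    case False
    then show ?thesis using eq sw by (cases "s = None") auto
  qed
qed

lemma fh_nonneg: "s \<in> states d N \<Longrightarrow> first_hit d N p q n s \<ge> 0"
proof (induction n arbitrary: s)
  case 0 then show ?case by simp
next
  case (Suc n)
  then show ?case by (auto intro!: sum_nonneg mult_nonneg_nonneg trans_nonneg')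
qed

lemma hh_nonneg: "s \<in> states d N \<Longrightarrow> hh s \<ge> 0"
proof (cases s)
  case (Some y)
  assume "s \<in> states d N"
  then have y: "y \<in> grid d N" using Some by (auto simp: states_def)
  have "H y \<ge> 0" unfolding H_def using y by (intro prod_nonneg a_nonneg) (auto simp: grid_def)
  then show ?thesis using Some D_pos by (simp add: hh_def)
qed (simp add: hh_def)

lemma hh_T: "hh T = 1"
  using D_pos by (simp add: hh_def D_def)

lemma T_states: "T \<in> states d N"
  using N1 by (auto simp: states_def grid_def)

lemma S_le: "s \<in> states d N \<Longrightarrow> S n s \<le> hh s"
proof (induction n arbitrary: s)
  case 0 then show ?case using hh_nonneg by simp
next
  case (Suc n)
  show ?case
  proof (cases "s = T \<or> s = None")
    case True then show ?thesis using hh_T by (subst S_rec) (auto simp: hh_def)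
  next
    case False
    then obtain x where x: "s = Some x" "x \<in> grid d N" using Suc.prems by (auto simp: states_def)
    have "S (Suc n) s = (\<Sum>t\<in>states d N. P s t * S n t)" using False by (subst S_rec) auto
    also have "\<dots> \<le> (\<Sum>t\<in>states d N. P s t * hh t)"
      using Suc.IH trans_nonneg' Suc.prems by (intro sum_mono mult_left_mono) auto
    also have "\<dots> = hh s" using hh_harm x by simp
    finally show ?thesis .
  qed
qed

lemma summ: "s \<in> states d N \<Longrightarrow> summable (\<lambda>n. first_hit d N p q n s)"
  by (rule summableI_nonneg_bounded[where x = "hh s"]) (auto intro: fh_nonneg S_le)

lemma rho_lim: "s \<in> states d N \<Longrightarrow> (\<lambda>n. S n s) \<longlonglongrightarrow> rho d N p q s"
  unfolding rho_def by (rule summable_LIMSEQ[OF summ])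

lemma rho_le: "s \<in> states d N \<Longrightarrow> rho d N p q s \<le> hh s"
  unfolding rho_def by (rule suminf_le_const[OF summ]) (auto intro: S_le)

lemma rho_T: "rho d N p q T = 1"
proof -
  have "(\<lambda>n. first_hit d N p q n T) = (\<lambda>n. if n = 0 then 1 else 0)"
  proof
    fix n show "first_hit d N p q n T = (if n = 0 then 1 else 0)" by (cases n) auto
  qed
  moreover have "(\<lambda>n::nat. if n = 0 then (1::real) else 0) sums 1"
    using sums_single[of 0 "\<lambda>_. 1::real"] by simp
  ultimately show ?thesis unfolding rho_def by (simp add: sums_iff)
qed

lemma rho_None: "rho d N p q None = 0"
proof -
  have "(\<lambda>n. first_hit d N p q n None) = (\<lambda>n. 0)"
  proof
    fix n show "first_hit d N p q n None = 0" by (cases n) auto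
  qed
  then show ?thesis unfolding rho_def by simp
qed

lemma rho_harm:
  assumes x: "x \<in> grid d N" and xT: "Some x \<noteq> T"
  shows "rho d N p q (Some x) = (\<Sum>t\<in>states d N. P (Some x) t * rho d N p q t)"
proof -
  have xs: "Some x \<in> states d N" using x by (simp add: states_def)
  have 1: "(\<lambda>n. S (Suc n) (Some x)) \<longlonglongrightarrow> rho d N p q (Some x)"
    by (rule LIMSEQ_Suc[OF rho_lim[OF xs]])
  have 2: "(\<lambda>n. \<Sum>t\<in>states d N. P (Some x) t * S n t) \<longlonglongrightarrow> (\<Sum>t\<in>states d N. P (Some x) t * rho d N p q t)"
    by (intro tendsto_sum tendsto_mult_left rho_lim)
  have "\<And>n. S (Suc n) (Some x) = (\<Sum>t\<in>states d N. P (Some x) t * S n t)"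
    using xT by (subst S_rec) simp
  then have "(\<lambda>n. S (Suc n) (Some x)) = (\<lambda>n. \<Sum>t\<in>states d N. P (Some x) t * S n t)"
    by (simp only:)
  with 1 2 show ?thesis using LIMSEQ_unique by metis
qed

lemma down_pos:
  assumes x: "x \<in> grid d N" and j: "j < d" and c: "2 \<le> x!j" "x!j < N j"
  shows "P (Some x) (Some (x[j:=x!j-1])) > 0"
proof -
  define y where "y = x[j:=x!j-1]"
  have xl: "length x = d" "\<forall>k<d. x!k \<le> N k" using x by (auto simp: grid_def)
  define F where "F = (\<lambda>k. (if y = x[k := x ! k + 1] then p k (x ! k) else 0)
              + (if 2 \<le> x ! k \<and> y = x[k := x ! k - 1] then q k (x ! k) else 0))"
  have eq: "P (Some x) (Some y) = (if y = x then 1 - R x else 0) + sum F {..<d}"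
    unfolding F_def by (simp only: trans.simps R_def)
  have yx: "y \<noteq> x"
  proof
    assume "y = x"
    then have "y!j = x!j" by simp
    then show False using c j xl unfolding y_def by simp
  qed
  have Fnn: "\<forall>k\<in>{..<d}. F k \<ge> 0" using pq01 xl unfolding F_def by auto
  have Fj: "F j \<ge> q j (x!j)" using pq01 xl j c unfolding F_def y_def by auto
  have qpos: "q j (x!j) > 0" using pqpos j c by auto
  have "F j \<le> sum F {..<d}" using Fnn j by (intro member_le_sum) auto
  then show ?thesis using eq yx Fj qpos unfolding y_def[symmetric] by simp
qed

lemma maxp:
  assumes harm: "\<And>x. x \<in> grid d N \<Longrightarrow> Some x \<noteq> T \<Longrightarrow> u (Some x) = (\<Sum>t\<in>states d N. P (Some x) t * u t)"
    and u0: "u None = 0" and uT: "u T = 0" and s: "s \<in> states d N"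
  shows "u s \<le> 0"
proof (rule ccontr)
  assume nle: "\<not> u s \<le> 0"
  define M where "M = Max (u ` states d N)"
  have fin: "finite (u ` states d N)" using states_fin by simp
  have ge: "\<And>t. t \<in> states d N \<Longrightarrow> u t \<le> M" unfolding M_def using fin by (intro Max_ge) auto
  have "M \<in> u ` states d N" unfolding M_def using fin s by (intro Max_in) auto
  then obtain s0 where s0: "s0 \<in> states d N" "u s0 = M" by auto
  have Mpos: "M > 0" using ge[OF s] nle by simp
  have key: "u t = M" if x: "x \<in> grid d N" "Some x \<noteq> T" "u (Some x) = M"
    and t: "t \<in> states d N" "P (Some x) t > 0" for x t
  proof -
    have "(\<Sum>t\<in>states d N. P (Some x) t * (M - u t)) = (\<Sum>t\<in>states d N. M * P (Some x) t - P (Some x) t * u t)"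
      by (intro sum.cong) (auto simp: algebra_simps)
    also have "\<dots> = M * (\<Sum>t\<in>states d N. P (Some x) t) - (\<Sum>t\<in>states d N. P (Some x) t * u t)"
      by (simp add: sum_subtractf sum_distrib_left)
    also have "\<dots> = 0" using row_sum[OF x(1)] harm[OF x(1) x(2)] x(3) by simp
    finally have z: "(\<Sum>t\<in>states d N. P (Some x) t * (M - u t)) = 0" .
    have nn: "\<forall>t\<in>states d N. P (Some x) t * (M - u t) \<ge> 0"
    proof
      fix t assume "t \<in> states d N"
      then show "0 \<le> P (Some x) t * (M - u t)"
        using trans_nonneg[OF x(1), of t] ge[of t] by (intro mult_nonneg_nonneg) simp_all
    qed
    have iff: "((\<Sum>t\<in>states d N. P (Some x) t * (M - u t)) = 0) = (\<forall>t\<in>states d N. P (Some x) t * (M - u t) = 0)"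
      using nn by (intro sum_nonneg_eq_0_iff[OF states_fin]) blast
    have "\<forall>t\<in>states d N. P (Some x) t * (M - u t) = 0"
      using iff z by simp
    then show ?thesis using t by auto
  qed
  have "s0 \<noteq> None"
  proof
    assume "s0 = None" then show False using s0 u0 Mpos by simp
  qed
  then obtain x0 where x0: "s0 = Some x0" "x0 \<in> grid d N" using s0 by (auto simp: states_def)
  have "s0 \<noteq> T"
  proof
    assume "s0 = T" then show False using s0 uT Mpos by simp
  qed
  have "\<exists>j<d. x0!j < N j"
  proof (rule ccontr)
    assume "\<not> (\<exists>j<d. x0!j < N j)"
    then have "x0 = map N [0..<d]" using x0(2)
      by (intro nth_equalityI) (auto simp: grid_def intro: antisym, metis not_less le_antisym)
    then show False using \<open>s0 \<noteq> T\<close> x0 by simp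
  qed
  then obtain j where j: "j < d" "x0!j < N j" by auto
  have ind: "\<forall>x. x \<in> grid d N \<longrightarrow> x!j = k \<longrightarrow> x!j < N j \<longrightarrow> u (Some x) = M \<longrightarrow> False" for k
  proof (induction k)
    case 0 show ?case using j by (auto simp: grid_def)
  next
    case (Suc k)
    show ?case
    proof (intro allI impI)
      fix x assume x: "x \<in> grid d N" "x!j = Suc k" "x!j < N j" "u (Some x) = M"
      have xT: "Some x \<noteq> T" using x(3) j by auto
      show False
      proof (cases "k = 0")
        case True
        have q1: "q j 1 > 0" using pqpos j x(2,3) True by auto
        have "q j 1 \<le> (\<Sum>i\<in>{i. i < d \<and> x!i = 1}. q i 1)"
          using pq01 N1 j x(2) True by (intro member_le_sum) auto
        then have "P (Some x) None > 0" using q1 by simp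
        then have "u None = M" using key[OF x(1) xT x(4)] by (simp add: states_def)
        then show False using u0 Mpos by simp
      next
        case False
        have c: "2 \<le> x!j" using False x(2) by simp
        have yg: "x[j:=x!j-1] \<in> grid d N" using down_grid[OF x(1) j(1) c] .
        have "u (Some (x[j:=x!j-1])) = M"
          using key[OF x(1) xT x(4)] down_pos[OF x(1) j(1) c x(3)] yg by (simp add: states_def)
        moreover have "x[j:=x!j-1] ! j = k" "x[j:=x!j-1] ! j < N j" using x j yg by (auto simp: grid_def)
        ultimately show False using Suc.IH yg by blast
      qed
    qed
  qed
  then show False using x0 s0 j by blast
qed

lemma rho_eq: "x \<in> grid d N \<Longrightarrow> rho d N p q (Some x) = hh (Some x)"
proof -
  assume x: "x \<in> grid d N"
  define u where "u = (\<lambda>s. hh s - rho d N p q s)"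
  have "u (Some x) \<le> 0"
  proof (rule maxp)
    fix y assume y: "y \<in> grid d N" "Some y \<noteq> T"
    have "u (Some y) = (\<Sum>t\<in>states d N. P (Some y) t * hh t) - (\<Sum>t\<in>states d N. P (Some y) t * rho d N p q t)"
      unfolding u_def using hh_harm[OF y(1)] rho_harm[OF y] by simp
    also have "\<dots> = (\<Sum>t\<in>states d N. P (Some y) t * u t)"
      unfolding u_def by (simp add: sum_subtractf right_diff_distrib)
    finally show "u (Some y) = (\<Sum>t\<in>states d N. P (Some y) t * u t)" .
  next
    show "u None = 0" unfolding u_def by (simp add: rho_None hh_def)
  next
    show "u T = 0" unfolding u_def by (simp add: rho_T hh_T)
  next
    show "Some x \<in> states d N" using x by (simp add: states_def)
  qed
  moreover have "rho d N p q (Some x) \<le> hh (Some x)" using x by (intro rho_le) (simp add: states_def)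
  ultimately show ?thesis unfolding u_def by simp
qed

end

theorem theorem2p1:
  fixes d :: nat and N :: "nat \<Rightarrow> nat" and p q :: "nat \<Rightarrow> nat \<Rightarrow> real"
  assumes "d \<ge> 1"
    and "\<forall>j<d. N j \<ge> 1"
    and "\<forall>j<d. \<forall>i\<le>N j. 0 \<le> p j i \<and> p j i \<le> 1 \<and> 0 \<le> q j i \<and> q j i \<le> 1"
    and "\<forall>j<d. p j 0 = 0 \<and> q j 0 = 0 \<and> p j (N j) = 0 \<and> q j (N j) = 0"
    and "\<forall>j<d. \<forall>i. 1 \<le> i \<and> i \<le> N j - 1 \<longrightarrow> p j i > 0 \<and> q j i > 0"
    and "\<forall>x\<in>grid d N. (\<Sum>k<d. p k (x ! k) + q k (x ! k)) \<le> 1"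
    and "x \<in> grid d N"
  shows "rho d N p q (Some x) =
    (\<Prod>j<d. \<Sum>n=1..x ! j. \<Prod>r=1..<n. q j r / p j r) /
    (\<Prod>j<d. \<Sum>n=1..N j. \<Prod>r=1..<n. q j r / p j r)"
proof -
  interpret gr d N p q using assms by unfold_locales auto
  have "rho d N p q (Some x) = hh (Some x)" using rho_eq assms(7) by simp
  also have "\<dots> = (\<Prod>j<d. a j (x!j)) / (\<Prod>j<d. a j (map N [0..<d] ! j))"
    unfolding hh_def H_def D_def by simp
  also have "(\<Prod>j<d. a j (map N [0..<d] ! j)) = (\<Prod>j<d. a j (N j))"
    by (intro prod.cong) auto
  finally show ?thesis unfolding a_def .
qed

end
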